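(* Let $0<\delta_0<1$ and $B=\max\big(\frac5{\delta_0},\frac1{0.45}\ln\frac5{\delta_0^2}\big)$. There exists $m\in\mathbb{N}$ such that the polynomial \[h_2(x)=1-(1-x)^3\sum_{l=0}^m\frac{(-Bx)^l}{l!}\] has zero constant term and satisfies (i) $h_2'(1)=h_2''(1)=0$; (ii) for all $\Delta\in[-0.55,1/\delta_0^2]$, $|h_2(1+\Delta)-1|\le\frac{\delta_0^2|\Delta|}{5}$; (iii) for all $\Delta\in[-1,-0.55]$, $0\le h_2(1+\Delta)\le1$. *)

theory Defs
  imports "HOL-Computational_Algebra.Polynomial"
begin

definition B_const :: "real \<Rightarrow> real" where
  "B_const d0 = max (5 / d0) ((1 / 0.45) * ln (5 / d0\<^sup>2))"

definition h2 :: "real \<Rightarrow> nat \<Rightarrow> real poly" where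
  "h2 B m = 1 - [:1, -1:] ^ 3 * (\<Sum>l = 0..m. monom ((-B) ^ l / fact l) l)"

end

theory Submission imports Defs begin

lemma taylor_bound:
  fixes Y y :: real and n :: nat
  assumes "0 \<le> y" "y \<le> Y" "even n" "exp Y * Y^n / fact n \<le> exp (-Y)"
  shows "0 \<le> (\<Sum>l<n. (-y)^l / fact l) \<and> (\<Sum>l<n. (-y)^l / fact l) \<le> exp (-y)"
proof -
  obtain t where t: "\<bar>t\<bar> \<le> \<bar>-y\<bar>" and e: "exp (-y) = (\<Sum>l<n. (-y)^l / fact l) + exp t / fact n * (-y)^n"
    using Maclaurin_exp_le[of "-y" n] by blast
  have pw: "(-y)^n = y^n" using assms(3) by simp
  have R0: "0 \<le> exp t / fact n * y^n" using assms(1) by simp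
  have "exp t \<le> exp Y" using t assms by simp
  hence "exp t / fact n * y^n \<le> exp Y / fact n * Y^n"
    by (intro mult_mono divide_right_mono power_mono) (use assms in auto)
  also have "\<dots> \<le> exp (-Y)" using assms(4) by simp
  also have "\<dots> \<le> exp (-y)" using assms by simp
  finally show ?thesis using e[unfolded pw] R0 by linarith
qed

lemma exists_n:
  fixes Y :: real
  shows "\<exists>n. even n \<and> 0 < n \<and> exp Y * Y^n / fact n \<le> exp (-Y)"
proof -
  have "summable (\<lambda>n. Y^n /\<^sub>R fact n)" using exp_converges sums_summable by blast
  hence "(\<lambda>n. Y^n /\<^sub>R fact n) \<longlonglongrightarrow> 0" by (rule summable_LIMSEQ_zero)
  hence "(\<lambda>n. exp Y * (Y^n /\<^sub>R fact n)) \<longlonglongrightarrow> 0" by (rule tendsto_mult_right_zero)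
  hence "eventually (\<lambda>n. exp Y * (Y^n /\<^sub>R fact n) < exp (-Y)) sequentially"
    by (rule order_tendstoD(2)) simp
  then obtain N where N: "\<And>n. n \<ge> N \<Longrightarrow> exp Y * (Y^n /\<^sub>R fact n) < exp (-Y)"
    unfolding eventually_sequentially by blast
  have "exp Y * Y^(2*N+2) / fact (2*N+2) \<le> exp (-Y)"
    using N[of "2*N+2"] by (simp add: divide_inverse mult.assoc mult.commute)
  thus ?thesis by (intro exI[of _ "2*N+2"]) auto
qed

lemma poly_h2: "poly (h2 B m) x = 1 - (1-x)^3 * (\<Sum>l=0..m. (-B*x)^l / fact l)"
proof -
  have "(\<Sum>l=0..m. (-B*x)^l / fact l) = (\<Sum>l=0..m. (-B)^l / fact l * x^l)"
    by (intro sum.cong refl) (simp only: mult_minus_left[symmetric] power_mult_distrib, simp)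
  thus ?thesis unfolding h2_def by (simp add: poly_sum poly_monom)
qed

lemma derivs_gen:
  fixes q S :: "real poly" assumes "poly q 1 = 0"
  shows "poly (pderiv (1 - q*q*q*S)) 1 = 0 \<and> poly (pderiv (pderiv (1 - q*q*q*S))) 1 = 0"
  using assms by (simp add: pderiv_mult pderiv_diff pderiv_minus)

lemma derivs_h2: "poly (pderiv (h2 B m)) 1 = 0 \<and> poly (pderiv (pderiv (h2 B m))) 1 = 0"
proof -
  have "h2 B m = 1 - [:1,-1:]*[:1,-1:]*[:1,-1:]*(\<Sum>l = 0..m. monom ((-B) ^ l / fact l) l)"
    unfolding h2_def by (simp add: power3_eq_cube)
  thus ?thesis using derivs_gen[of "[:1,-1:]"] by simp
qed

lemma coeff_h2: "coeff (h2 B m) 0 = 0"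
proof -
  have "coeff (h2 B m) 0 = poly (h2 B m) 0" by (simp add: poly_0_coeff_0)
  also have "\<dots> = 0" by (simp add: poly_h2 sum.atLeast_Suc_atMost, intro sum.neutral) auto
  finally show ?thesis .
qed

lemma poly_h2': "poly (h2 B m) x = 1 - (1-x)^3 * (\<Sum>l<Suc m. (-(B*x))^l / fact l)"
  by (simp add: poly_h2 atLeast0AtMost lessThan_Suc_atMost)

lemma exp_sq_bound:
  fixes z :: real assumes "0 \<le> z" shows "z^2 / 4 \<le> exp z"
proof -
  have "exp z = exp (z/2)^2" by (simp add: exp_double[symmetric] power2_eq_square exp_add[symmetric])
  moreover have "z/2 \<le> exp (z/2)" using exp_ge_add_one_self[of "z/2"] by linarith
  hence "(z/2)^2 \<le> exp (z/2)^2" using assms by (intro power_mono) auto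
  ultimately show ?thesis by (simp add: power_divide)
qed

theorem lemma4p8:
  fixes d0 :: real
  assumes "0 < d0" and "d0 < 1"
  shows "\<exists>m::nat. let h = h2 (B_const d0) m in
           coeff h 0 = 0 \<and>
           poly (pderiv h) 1 = 0 \<and> poly (pderiv (pderiv h)) 1 = 0 \<and>
           (\<forall>\<Delta>::real. -0.55 \<le> \<Delta> \<and> \<Delta> \<le> 1 / d0\<^sup>2 \<longrightarrow>
              \<bar>poly h (1 + \<Delta>) - 1\<bar> \<le> d0\<^sup>2 * \<bar>\<Delta>\<bar> / 5) \<and>
           (\<forall>\<Delta>::real. -1 \<le> \<Delta> \<and> \<Delta> \<le> -0.55 \<longrightarrow>
              0 \<le> poly h (1 + \<Delta>) \<and> poly h (1 + \<Delta>) \<le> 1)"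
proof -
  define B where "B = B_const d0"
  define Y where "Y = B * (1 + 1/d0^2)"
  have B5: "5 / d0 \<le> B" unfolding B_def B_const_def by simp
  have Bln: "(1 / 0.45) * ln (5 / d0\<^sup>2) \<le> B" unfolding B_def B_const_def by simp
  have Bpos: "0 < B" using B5 assms(1) by (smt (verit) divide_pos_pos)
  obtain n where n: "even n" "0 < n" "exp Y * Y^n / fact n \<le> exp (-Y)" using exists_n by blast
  define m where "m = n - 1"
  have nm: "Suc m = n" using n(2) unfolding m_def by simp
  define T where "T = (\<lambda>y::real. \<Sum>l<n. (-y)^l / fact l)"
  have Tb: "0 \<le> T y \<and> T y \<le> exp (-y)" if "0 \<le> y" "y \<le> Y" for y
    unfolding T_def using taylor_bound[OF that n(1) n(3)] .
  have ph: "poly (h2 B m) (1 + \<Delta>) = 1 + \<Delta>^3 * T (B * (1 + \<Delta>))" for \<Delta>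
    unfolding poly_h2' nm T_def by (simp add: power_minus_odd)
  have e045: "exp (- (0.45 * B)) \<le> d0^2 / 5"
  proof -
    have "ln (5 / d0\<^sup>2) \<le> 0.45 * B" using Bln by simp
    hence "exp (- (0.45 * B)) \<le> exp (- ln (5 / d0\<^sup>2))" by simp
    also have "\<dots> = d0^2/5" using assms(1) by (simp add: exp_minus)
    finally show ?thesis .
  qed
  have part2: "\<bar>poly (h2 B m) (1 + \<Delta>) - 1\<bar> \<le> d0\<^sup>2 * \<bar>\<Delta>\<bar> / 5"
    if a: "-0.55 \<le> \<Delta>" "\<Delta> \<le> 1 / d0\<^sup>2" for \<Delta>
  proof -
    have y0: "0 \<le> B * (1 + \<Delta>)" using a Bpos by simp
    have yY: "B * (1 + \<Delta>) \<le> Y" unfolding Y_def using a Bpos by (intro mult_left_mono) auto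
    have T: "0 \<le> T (B * (1 + \<Delta>))" "T (B * (1 + \<Delta>)) \<le> exp (- (B * (1 + \<Delta>)))"
      using Tb[OF y0 yY] by auto
    have key: "\<Delta>^2 * exp (- (B * (1 + \<Delta>))) \<le> d0^2 / 5"
    proof (cases "\<Delta> \<le> 0")
      case True
      have "\<Delta>^2 \<le> 1" using a True by (simp add: abs_square_le_1)
      moreover have "exp (- (B * (1 + \<Delta>))) \<le> exp (- (0.45 * B))" using a Bpos by simp
      ultimately have "\<Delta>^2 * exp (- (B * (1 + \<Delta>))) \<le> 1 * exp (- (0.45 * B))"
        by (intro mult_mono) auto
      thus ?thesis using e045 by simp
    next
      case False
      have z: "(B*\<Delta>)^2/4 \<le> exp (B*\<Delta>)" using False Bpos by (intro exp_sq_bound) simp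
      have "exp (- (B * (1 + \<Delta>))) \<le> exp (- (B * \<Delta>))" using Bpos by simp
      also have "\<dots> = 1 / exp (B*\<Delta>)" by (simp add: exp_minus divide_inverse)
      also have "\<dots> \<le> 1 / ((B*\<Delta>)^2/4)" using False Bpos z by (intro divide_left_mono) auto
      finally have "\<Delta>^2 * exp (- (B * (1 + \<Delta>))) \<le> \<Delta>^2 * (1 / ((B*\<Delta>)^2/4))"
        by (intro mult_left_mono) auto
      also have "\<dots> = 4 / B^2" using False Bpos by (simp add: power_mult_distrib)
      also have "\<dots> \<le> 4 / (5/d0)^2" using B5 assms(1) by (intro divide_left_mono power_mono mult_pos_pos) auto
      also have "\<dots> \<le> d0^2/5" using assms(1) by (simp add: power_divide)
      finally show ?thesis .
    qed
    have "\<bar>poly (h2 B m) (1 + \<Delta>) - 1\<bar> = \<bar>\<Delta>\<bar> * (\<Delta>^2 * T (B * (1 + \<Delta>)))"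
      using T by (simp add: ph abs_mult power3_eq_cube power2_eq_square)
    also have "\<dots> \<le> \<bar>\<Delta>\<bar> * (\<Delta>^2 * exp (- (B * (1 + \<Delta>))))"
      using T by (intro mult_left_mono) auto
    also have "\<dots> \<le> \<bar>\<Delta>\<bar> * (d0^2 / 5)" using key by (intro mult_left_mono) auto
    finally show ?thesis by (simp add: mult.commute)
  qed
  have part3: "0 \<le> poly (h2 B m) (1 + \<Delta>) \<and> poly (h2 B m) (1 + \<Delta>) \<le> 1"
    if a: "-1 \<le> \<Delta>" "\<Delta> \<le> -0.55" for \<Delta>
  proof -
    have y0: "0 \<le> B * (1 + \<Delta>)" using a Bpos by simp
    have yY: "B * (1 + \<Delta>) \<le> Y" unfolding Y_def using a Bpos assms(1) proof (intro mult_left_mono) show "1 + \<Delta> \<le> 1 + 1/d0^2" using a assms(1) by (smt (verit) divide_nonneg_nonneg zero_le_power2) qed (use Bpos in auto)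
    have T: "0 \<le> T (B * (1 + \<Delta>))" "T (B * (1 + \<Delta>)) \<le> 1"
    proof -
      have "exp (- (B * (1 + \<Delta>))) \<le> 1" using y0 by simp
      thus "0 \<le> T (B * (1 + \<Delta>))" "T (B * (1 + \<Delta>)) \<le> 1" using Tb[OF y0 yY] by linarith+
    qed
    have nd: "0 \<le> -\<Delta>" "-\<Delta> \<le> 1" using a by auto
    have p1: "(-\<Delta>)^3 \<le> 1" using nd by (rule power_le_one)
    have p0: "0 \<le> (-\<Delta>)^3" using nd(1) by (rule zero_le_power)
    have pe: "\<Delta>^3 = - ((-\<Delta>)^3)" by (simp add: power_minus_odd)
    have d3: "\<Delta>^3 \<le> 0" "-1 \<le> \<Delta>^3" using p0 p1 pe by linarith+
    have "\<Delta>^3 * T (B * (1 + \<Delta>)) \<le> 0" using d3 T by (simp add: mult_nonpos_nonneg)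
    moreover have "-1 \<le> \<Delta>^3 * T (B * (1 + \<Delta>))"
    proof -
      have "(-(\<Delta>^3)) * T (B * (1 + \<Delta>)) \<le> 1 * 1" using d3 T by (intro mult_mono) auto
      thus ?thesis by simp
    qed
    ultimately show ?thesis by (simp add: ph)
  qed
  show ?thesis
    apply (rule exI[of _ m])
    unfolding Let_def B_def[symmetric]
    using coeff_h2 derivs_h2 part2 part3 by blast
qed

end
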